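(* For every $*$-term $P\land^\circ Q$ with $P\in P^*$ and $Q\in P^d$, the tree $se(P\land^\circ Q)$ has exactly one conjunction decomposition, namely $(se(P)[\mathsf T\mapsto\triangle],\,se(Q))$, and has no disjunction decomposition. For every $*$-term $P\lor^\circ Q$ with $P\in P^*$ and $Q\in P^c$, the tree $se(P\lor^\circ Q)$ has no conjunction decomposition and has exactly one disjunction decomposition, namely $(se(P)[\mathsf F\mapsto\triangle],\,se(Q))$.
   Context: Let $A$ be a nonempty set of atoms; terms are closed terms over constants $\mathsf T,\mathsf F$, atoms $a\in A$, unary $\neg$, binary $\land^\circ$, $\lor^\circ$. Evaluation trees $\mathcal T_A$: $\mathsf T,\mathsf F\in\mathcal T_A$ and $(X\unlhd a\unrhd Y)\in\mathcal T_A$ for $X,Y\in\mathcal T_A$, $a\in A$; depth $d(\mathsf T)=d(\mathsf F)=0$, $d(Y\unlhd a\unrhd Z)=1+\max(d(Y),d(Z))$. $\mathcal T_{A,\triangle}$: the same with leaves in $\{\mathsf T,\mathsf F,\triangle\}$. Leaf replacement $X[\ell_1\mapsto Y_1,\ldots]$ replaces every leaf labelled $\ell_i$ by $Y_i$. $se$: $se(\mathsf T)=\mathsf T$, $se(\mathsf F)=\mathsf F$, $se(a)=\mathsf T\unlhd a\unrhd\mathsf F$, $se(\neg P)=se(P)[\mathsf T\mapsto\mathsf F,\mathsf F\mapsto\mathsf T]$, $se(P\land^\circ Q)=se(P)[\mathsf T\mapsto se(Q)]$, $se(P\lor^\circ Q)=se(P)[\mathsf F\mapsto se(Q)]$. Syntactic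 categories ($a\in A$): $\mathsf T$-terms $P^{\mathsf T}::=\mathsf T\mid(a\land^\circ P^{\mathsf T})\lor^\circ P^{\mathsf T}$; $\mathsf F$-terms $P^{\mathsf F}::=\mathsf F\mid(a\lor^\circ P^{\mathsf F})\land^\circ P^{\mathsf F}$; $\ell$-terms $P^\ell::=(a\land^\circ P^{\mathsf T})\lor^\circ P^{\mathsf F}\mid(\neg a\land^\circ P^{\mathsf T})\lor^\circ P^{\mathsf F}$; $*$-terms $P^*::=P^c\mid P^d$, $P^c::=P^\ell\mid P^*\land^\circ P^d$, $P^d::=P^\ell\mid P^*\lor^\circ P^c$. A pair $(Y,Z)\in\mathcal T_{A,\triangle}\times\mathcal T_A$ is a candidate conjunction decomposition (ccd) of $X\in\mathcal T_A$ if $X=Y[\triangle\mapsto Z]$, $Y$ contains $\triangle$, $Y$ contains $\mathsf F$ but not $\mathsf T$, and $Z$ contains both $\mathsf T$ and $\mathsf F$; it is a candidate disjunction decomposition (cdd) if the same holds with "$Y$ contains $\mathsf T$ but not $\mathsf F$" instead. A ccd $(Y,Z)$ of $X$ is a conjunction decomposition (cd) if there is no other ccd $(Y',Z')$ of $X$ with $d(Z')<d(Z)$; similarly a cdd $(Y,Z)$ is a disjunction decomposition (dd) if there is no other cdd $(Y',Z')$ of $X$ with $d(Z')<d(Z)$. *)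

theory Defs
  imports Main
begin

(* Closed terms over atoms of type 'a (the set A is the universe of 'a, hence nonempty) *)
datatype 'a trm = TT | FF | Atom 'a | Neg "'a trm"
  | LAnd "'a trm" "'a trm" | LOr "'a trm" "'a trm"

datatype leaf = LT | LF | LTri

datatype 'a tree = Leaf leaf | Node "'a tree" 'a "'a tree"
  (* Node X a Y  represents  X <| a |> Y *)

fun depth :: "'a tree \<Rightarrow> nat" where
  "depth (Leaf _) = 0"
| "depth (Node Y a Z) = 1 + max (depth Y) (depth Z)"

fun leaves :: "'a tree \<Rightarrow> leaf set" where
  "leaves (Leaf l) = {l}"
| "leaves (Node Y a Z) = leaves Y \<union> leaves Z"

definition in_TA :: "'a tree \<Rightarrow> bool" where
  "in_TA X \<longleftrightarrow> LTri \<notin> leaves X"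

fun repl :: "'a tree \<Rightarrow> (leaf \<Rightarrow> 'a tree) \<Rightarrow> 'a tree" where
  "repl (Leaf l) f = f l"
| "repl (Node Y a Z) f = Node (repl Y f) a (repl Z f)"

fun se :: "'a trm \<Rightarrow> 'a tree" where
  "se TT = Leaf LT"
| "se FF = Leaf LF"
| "se (Atom a) = Node (Leaf LT) a (Leaf LF)"
| "se (Neg P) = repl (se P) ((\<lambda>l. Leaf l)(LT := Leaf LF, LF := Leaf LT))"
| "se (LAnd P Q) = repl (se P) ((\<lambda>l. Leaf l)(LT := se Q))"
| "se (LOr P Q) = repl (se P) ((\<lambda>l. Leaf l)(LF := se Q))"

inductive Tterm :: "'a trm \<Rightarrow> bool" where
  "Tterm TT"
| "Tterm P \<Longrightarrow> Tterm Q \<Longrightarrow> Tterm (LOr (LAnd (Atom a) P) Q)"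

inductive Fterm :: "'a trm \<Rightarrow> bool" where
  "Fterm FF"
| "Fterm P \<Longrightarrow> Fterm Q \<Longrightarrow> Fterm (LAnd (LOr (Atom a) P) Q)"

inductive lterm :: "'a trm \<Rightarrow> bool" where
  "Tterm P \<Longrightarrow> Fterm Q \<Longrightarrow> lterm (LOr (LAnd (Atom a) P) Q)"
| "Tterm P \<Longrightarrow> Fterm Q \<Longrightarrow> lterm (LOr (LAnd (Neg (Atom a)) P) Q)"

inductive sterm :: "'a trm \<Rightarrow> bool"
  and cterm :: "'a trm \<Rightarrow> bool"
  and dterm :: "'a trm \<Rightarrow> bool" where
  "cterm P \<Longrightarrow> sterm P"
| "dterm P \<Longrightarrow> sterm P"
| "lterm P \<Longrightarrow> cterm P"
| "sterm P \<Longrightarrow> dterm Q \<Longrightarrow> cterm (LAnd P Q)"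
| "lterm P \<Longrightarrow> dterm P"
| "sterm P \<Longrightarrow> cterm Q \<Longrightarrow> dterm (LOr P Q)"

definition ccd :: "'a tree \<Rightarrow> 'a tree \<Rightarrow> 'a tree \<Rightarrow> bool" where
  "ccd X Y Z \<longleftrightarrow> in_TA Z \<and> X = repl Y ((\<lambda>l. Leaf l)(LTri := Z))
     \<and> LTri \<in> leaves Y \<and> LF \<in> leaves Y \<and> LT \<notin> leaves Y
     \<and> LT \<in> leaves Z \<and> LF \<in> leaves Z"

definition cdd :: "'a tree \<Rightarrow> 'a tree \<Rightarrow> 'a tree \<Rightarrow> bool" where
  "cdd X Y Z \<longleftrightarrow> in_TA Z \<and> X = repl Y ((\<lambda>l. Leaf l)(LTri := Z))
     \<and> LTri \<in> leaves Y \<and> LT \<in> leaves Y \<and> LF \<notin> leaves Y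
     \<and> LT \<in> leaves Z \<and> LF \<in> leaves Z"

definition cd :: "'a tree \<Rightarrow> 'a tree \<Rightarrow> 'a tree \<Rightarrow> bool" where
  "cd X Y Z \<longleftrightarrow> ccd X Y Z \<and>
     \<not> (\<exists>Y' Z'. (Y', Z') \<noteq> (Y, Z) \<and> ccd X Y' Z' \<and> depth Z' < depth Z)"

definition dd :: "'a tree \<Rightarrow> 'a tree \<Rightarrow> 'a tree \<Rightarrow> bool" where
  "dd X Y Z \<longleftrightarrow> cdd X Y Z \<and>
     \<not> (\<exists>Y' Z'. (Y', Z') \<noteq> (Y, Z) \<and> cdd X Y' Z' \<and> depth Z' < depth Z)"

end

theory Submission
  imports Defs
begin


definition gl :: "leaf \<Rightarrow> 'a tree \<Rightarrow> leaf \<Rightarrow> 'a tree" where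
  "gl l0 U = (\<lambda>l. Leaf l)(l0 := U)"

lemma gl_apply[simp]: "gl l0 U l = (if l = l0 then U else Leaf l)"
  by (simp add: gl_def)

lemma gl_eta[simp]: "(\<lambda>a. if a = l0 then U else Leaf a) = gl l0 U"
  by (auto simp: gl_def)

lemma leaves_repl: "leaves (repl A f) = (\<Union>l\<in>leaves A. leaves (f l))"
  by (induction A) auto
lemma leaves_ne: "leaves A \<noteq> {}"
  by (induction A) auto
lemma repl_cong: "(\<And>l. l \<in> leaves A \<Longrightarrow> f l = g l) \<Longrightarrow> repl A f = repl A g"
  by (induction A) auto
lemma repl_repl: "repl (repl A f) g = repl A (\<lambda>l. repl (f l) g)"
  by (induction A) auto
lemma repl_id: "l0 \<notin> leaves A \<Longrightarrow> repl A (gl l0 U) = A"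
  by (induction A) auto
lemma depth_ge: "l \<in> leaves A \<Longrightarrow> depth (f l) \<le> depth (repl A f)"
  by (induction A) auto
lemma depth_gt: "l \<in> leaves A \<Longrightarrow> \<forall>l'. A \<noteq> Leaf l' \<Longrightarrow> depth (f l) < depth (repl A f)"
  by (cases A) (auto dest: depth_ge[where f=f] simp del: depth.simps(1))

lemma leaves_gl: "leaves (repl A (gl l0 U)) = leaves A - {l0} \<union> (if l0 \<in> leaves A then leaves U else {})"
  by (auto simp: leaves_repl split: if_splits)

lemma se_noTri: "LTri \<notin> leaves (se P)"
  by (induction P) (auto simp: leaves_repl split: if_splits)

lemma Tterm_leaves: "Tterm P \<Longrightarrow> leaves (se P) = {LT}"
  by (induction rule: Tterm.induct) (auto simp: leaves_repl)
lemma Fterm_leaves: "Fterm P \<Longrightarrow> leaves (se P) = {LF}"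
  by (induction rule: Fterm.induct) (auto simp: leaves_repl)

lemma lterm_shape: "lterm P \<Longrightarrow> \<exists>A a B. se P = Node A a B \<and>
   ((leaves A = {LT} \<and> leaves B = {LF}) \<or> (leaves A = {LF} \<and> leaves B = {LT}))"
  by (induction rule: lterm.induct) (auto simp: repl_id[unfolded gl_def] Tterm_leaves Fterm_leaves)

lemma star_leaves:
  shows "sterm P \<Longrightarrow> LT \<in> leaves (se P) \<and> LF \<in> leaves (se P)"
    and "cterm P \<Longrightarrow> LT \<in> leaves (se P) \<and> LF \<in> leaves (se P)"
    and "dterm P \<Longrightarrow> LT \<in> leaves (se P) \<and> LF \<in> leaves (se P)"
proof (induction rule: sterm_cterm_dterm.inducts)
  case (3 P) then show ?case using lterm_shape[OF 3] by auto
next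
  case (5 P) then show ?case using lterm_shape[OF 5] by auto
qed (auto simp: leaves_repl)


lemma L_A: "repl A (gl l0 U) = repl Y (gl LTri Z) \<Longrightarrow> l \<in> leaves A \<Longrightarrow> l \<noteq> l0 \<Longrightarrow> l \<notin> leaves Y
   \<Longrightarrow> \<exists>A'. Z = repl A' (gl l0 U) \<and> l \<in> leaves A'"
proof (induction A arbitrary: Y)
  case (Leaf x)
  then show ?case by (cases Y) (auto split: if_splits intro!: exI[of _ "Leaf l"])
next
  case (Node A1 a A2)
  show ?case
  proof (cases Y)
    case (Leaf m)
    then show ?thesis using Node.prems by (auto split: if_splits intro!: exI[of _ "Node A1 a A2"])
  next
    case (Node Y1 b Y2)
    then show ?thesis using Node.prems Node.IH by auto
  qed
qed

lemma L_Y: "repl A (gl l0 U) = repl Y (gl LTri Z) \<Longrightarrow> l0 \<in> leaves Y \<Longrightarrow> l0 \<noteq> LTri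
   \<Longrightarrow> \<exists>Yc. U = repl Yc (gl LTri Z) \<and> l0 \<in> leaves Yc \<and> leaves Yc \<subseteq> leaves Y"
proof (induction A arbitrary: Y)
  case (Leaf x)
  show ?case
  proof (cases "x = l0")
    case True then show ?thesis using Leaf.prems by (intro exI[of _ Y]) auto
  next
    case False then show ?thesis using Leaf.prems by (cases Y) (auto split: if_splits)
  qed
next
  case (Node A1 a A2)
  show ?case
  proof (cases Y)
    case (Leaf m)
    then show ?thesis using Node.prems by (auto split: if_splits)
  next
    case (Node Y1 b Y2)
    have "Node (repl A1 (gl l0 U)) a (repl A2 (gl l0 U)) = Node (repl Y1 (gl LTri Z)) b (repl Y2 (gl LTri Z))"
      using Node.prems(1) unfolding Node repl.simps .
    then have e1: "repl A1 (gl l0 U) = repl Y1 (gl LTri Z)" and e2: "repl A2 (gl l0 U) = repl Y2 (gl LTri Z)"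
      by (simp_all only: tree.inject)
    have "l0 \<in> leaves Y1 \<or> l0 \<in> leaves Y2" using Node.prems Node by auto
    then show ?thesis
    proof
      assume "l0 \<in> leaves Y1"
      then obtain Yc where "U = repl Yc (gl LTri Z) \<and> l0 \<in> leaves Yc \<and> leaves Yc \<subseteq> leaves Y1"
        using Node.IH(1)[OF e1] Node.prems by blast
      then show ?thesis using Node by auto
    next
      assume "l0 \<in> leaves Y2"
      then obtain Yc where "U = repl Yc (gl LTri Z) \<and> l0 \<in> leaves Yc \<and> leaves Yc \<subseteq> leaves Y2"
        using Node.IH(2)[OF e2] Node.prems by blast
      then show ?thesis using Node by auto
    qed
  qed
qed

lemma L_mix:
  assumes "repl A (gl l0 U) = repl Y (gl LTri Z)" "l0 \<in> leaves Y" "l1 \<in> leaves A" "l1 \<notin> leaves Y"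
    "l1 \<in> leaves U" "l0 \<in> leaves Z" "l0 \<noteq> l1" "l0 \<noteq> LTri" "l1 \<noteq> LTri"
  shows False
proof -
  obtain Yc where Yc: "U = repl Yc (gl LTri Z)" "l0 \<in> leaves Yc" "leaves Yc \<subseteq> leaves Y"
    using L_Y[OF assms(1,2,8)] by blast
  have "LTri \<in> leaves Yc" using assms(5,4) Yc by (auto simp: leaves_repl split: if_splits)
  moreover have "\<forall>l'. Yc \<noteq> Leaf l'" using Yc(2) assms(8) \<open>LTri \<in> leaves Yc\<close> by auto
  ultimately have d1: "depth Z < depth U" using depth_gt[of LTri Yc "gl LTri Z"] Yc(1) by simp
  obtain A' where A': "Z = repl A' (gl l0 U)" "l1 \<in> leaves A'"
    using L_A[OF assms(1,3) _ assms(4)] assms(7) by blast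
  have "l0 \<in> leaves A'" using assms(6) A' by (auto simp: leaves_repl split: if_splits)
  then have "depth U \<le> depth Z" using depth_ge[of l0 A' "gl l0 U"] A'(1) by simp
  with d1 show False by simp
qed

lemma INJ: "l0 \<in> leaves U \<Longrightarrow> repl A (gl l0 U) = repl B (gl l0 U) \<Longrightarrow> A = B"
proof (induction A arbitrary: B)
  case (Leaf x)
  show ?case
  proof (cases B)
    case (Leaf y) then show ?thesis using Leaf.prems by (auto split: if_splits)
  next
    case (Node B1 b B2)
    show ?thesis
    proof (cases "l0 \<in> leaves B")
      case True
      have d: "depth U < depth (repl B (gl l0 U))" using depth_gt[OF True, of "gl l0 U"] Node by simp
      have "repl B (gl l0 U) = repl (Leaf x) (gl l0 U)" using Leaf.prems by simp
      then show ?thesis using d Node by (cases "x = l0") auto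
    next
      case False
      then show ?thesis using Leaf.prems Node by (auto simp: repl_id split: if_splits)
    qed
  qed
next
  case (Node A1 a A2)
  show ?case
  proof (cases B)
    case (Leaf y)
    show ?thesis
    proof (cases "l0 \<in> leaves (Node A1 a A2)")
      case True
      have d: "depth U < depth (repl (Node A1 a A2) (gl l0 U))" using depth_gt[OF True, of "gl l0 U"] by simp
      have "repl (Node A1 a A2) (gl l0 U) = repl (Leaf y) (gl l0 U)" using Node.prems Leaf by simp
      then show ?thesis using d by (cases "y = l0") auto
    next
      case False
      then have "repl (Node A1 a A2) (gl l0 U) = Node A1 a A2" by (rule repl_id)
      then show ?thesis using Node.prems Leaf False by (auto split: if_splits)
    qed
  next
    case (Node B1 b B2)
    then show ?thesis using Node.prems Node.IH by auto
  qed
qed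


lemma L_C:
  "repl A (gl l0 U) = repl Y (gl LTri Z) \<Longrightarrow> l0 \<in> leaves Z \<Longrightarrow> depth Z \<le> depth U \<Longrightarrow> l0 \<noteq> LTri
   \<Longrightarrow> (\<forall>Yc. U = repl Yc (gl LTri Z) \<longrightarrow> leaves Yc \<subseteq> leaves Y \<longrightarrow> Yc = Leaf LTri)
   \<Longrightarrow> Y = repl A (gl l0 (Leaf LTri)) \<and> (l0 \<in> leaves A \<longrightarrow> Z = U)"
proof (induction A arbitrary: Y)
  case (Leaf x)
  show ?case
  proof (cases "x = l0")
    case True
    then have "U = repl Y (gl LTri Z)" using Leaf.prems by simp
    then have "Y = Leaf LTri" using Leaf.prems(5) by blast
    then show ?thesis using Leaf.prems True by simp
  next
    case False
    then have "Leaf x = repl Y (gl LTri Z)" using Leaf.prems by simp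
    then show ?thesis using Leaf.prems False by (cases Y) (auto split: if_splits)
  qed
next
  case (Node A1 a A2)
  show ?case
  proof (cases Y)
    case (Leaf m)
    show ?thesis
    proof (cases "m = LTri")
      case True
      then have Z: "Z = repl (Node A1 a A2) (gl l0 U)" using Node.prems Leaf by simp
      have "l0 \<in> leaves (Node A1 a A2)"
      proof (rule ccontr)
        assume "l0 \<notin> leaves (Node A1 a A2)"
        then have "Z = Node A1 a A2" using Z repl_id by metis
        then show False using Node.prems(2) \<open>l0 \<notin> _\<close> by simp
      qed
      then have "depth U < depth Z" using depth_gt[of l0 "Node A1 a A2" "gl l0 U"] Z by simp
      then show ?thesis using Node.prems(3) by simp
    next
      case False
      then show ?thesis using Node.prems Leaf by simp
    qed
  next
    case (Node Y1 b Y2)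
    have "Node (repl A1 (gl l0 U)) a (repl A2 (gl l0 U)) = Node (repl Y1 (gl LTri Z)) b (repl Y2 (gl LTri Z))"
      using Node.prems(1) unfolding Node repl.simps .
    then have e1: "repl A1 (gl l0 U) = repl Y1 (gl LTri Z)" and e2: "repl A2 (gl l0 U) = repl Y2 (gl LTri Z)"
      and ab: "a = b" by (simp_all only: tree.inject)
    have g1: "\<forall>Yc. U = repl Yc (gl LTri Z) \<longrightarrow> leaves Yc \<subseteq> leaves Y1 \<longrightarrow> Yc = Leaf LTri"
      using Node.prems(5) Node by auto
    have g2: "\<forall>Yc. U = repl Yc (gl LTri Z) \<longrightarrow> leaves Yc \<subseteq> leaves Y2 \<longrightarrow> Yc = Leaf LTri"
      using Node.prems(5) Node by auto
    note i1 = Node.IH(1)[OF e1 Node.prems(2,3,4) g1]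
    note i2 = Node.IH(2)[OF e2 Node.prems(2,3,4) g2]
    show ?thesis using i1 i2 Node ab by auto
  qed
qed

lemma leaves_pow: "leaves Y = {LTri} \<Longrightarrow> leaves (repl Y (gl LTri Z)) = leaves Z"
  by (auto simp: leaves_repl)

lemma sub_single: "A \<union> B = {x} \<Longrightarrow> A \<noteq> {} \<Longrightarrow> B \<noteq> {} \<Longrightarrow> A = {x} \<and> B = {x}"
  by (simp add: Un_singleton_iff)

lemma L_P:
  "repl A (gl l0 U) = repl Y (gl LTri Z) \<Longrightarrow> leaves Y = {LTri} \<Longrightarrow> Z = repl A' (gl l0 U)
   \<Longrightarrow> l0 \<in> leaves A' \<Longrightarrow> l0 \<in> leaves U \<Longrightarrow> A = repl Y (gl LTri A')"
proof (induction Y arbitrary: A)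
  case (Leaf x)
  have x: "x = LTri" using Leaf.prems(2) by simp
  have "repl A (gl l0 U) = repl A' (gl l0 U)" using Leaf.prems(1,3) x by simp
  then have "A = A'" by (rule INJ[OF Leaf.prems(5)])
  then show ?case using x by simp
next
  case (Node Y1 b Y2)
  note IH1 = Node.IH(1) and IH2 = Node.IH(2) and pr = Node.prems
  have "leaves Y1 \<union> leaves Y2 = {LTri}" using Node.prems(2) by simp
  then have l1: "leaves Y1 = {LTri}" and l2: "leaves Y2 = {LTri}"
    using sub_single[OF _ leaves_ne leaves_ne] by blast+
  show ?case
  proof (cases A)
    case (Leaf x)
    show ?thesis
    proof (cases "x = l0")
      case True
      then have U: "U = repl (Node Y1 b Y2) (gl LTri Z)" using Node.prems(1) Leaf by simp
      have "LTri \<in> leaves (Node Y1 b Y2)" using Node.prems(2) by simp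
      from depth_gt[OF this, of "gl LTri Z"] have "depth Z < depth U" unfolding U by simp
      moreover have "depth U \<le> depth Z" using depth_ge[OF Node.prems(4), of "gl l0 U"] Node.prems(3) by simp
      ultimately show ?thesis by simp
    next
      case False
      then show ?thesis using Node.prems(1) Leaf by simp
    qed
  next
    case (Node A1 a A2)
    have "Node (repl A1 (gl l0 U)) a (repl A2 (gl l0 U)) = Node (repl Y1 (gl LTri Z)) b (repl Y2 (gl LTri Z))"
      using pr(1) unfolding Node repl.simps .
    then have e1: "repl A1 (gl l0 U) = repl Y1 (gl LTri Z)" and e2: "repl A2 (gl l0 U) = repl Y2 (gl LTri Z)"
      and ab: "a = b" by (simp_all only: tree.inject)
    show ?thesis using IH1[OF e1 l1 pr(3,4,5)] IH2[OF e2 l2 pr(3,4,5)] Node ab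
      by simp
  qed
qed

lemma se_and: "se (LAnd P Q) = repl (se P) (gl LT (se Q))" by (simp add: gl_def del: gl_eta)
lemma se_or: "se (LOr P Q) = repl (se P) (gl LF (se Q))" by (simp add: gl_def del: gl_eta)

lemma leaf3: "x = LT \<or> x = LF \<or> x = LTri" by (cases x) auto

lemma NP_l: "lterm P \<Longrightarrow> se P = repl Y (gl LTri Z) \<Longrightarrow> leaves Y = {LTri} \<Longrightarrow> Y \<noteq> Leaf LTri \<Longrightarrow> False"
proof -
  assume a: "lterm P" "se P = repl Y (gl LTri Z)" "leaves Y = {LTri}" "Y \<noteq> Leaf LTri"
  obtain A b B where s: "se P = Node A b B" and lv: "(leaves A = {LT} \<and> leaves B = {LF}) \<or> (leaves A = {LF} \<and> leaves B = {LT})"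
    using lterm_shape[OF a(1)] by blast
  have e: "repl Y (gl LTri Z) = Node A b B" using a(2) s by argo
  obtain Y1 Y2 where Y: "Y = Node Y1 b Y2" "A = repl Y1 (gl LTri Z)" "B = repl Y2 (gl LTri Z)"
  proof (cases Y)
    case (Leaf l)
    then have "l = LTri" using a(3) by simp
    then show ?thesis using a(4) Leaf by simp
  next
    case (Node Y1 c Y2)
    then show ?thesis using e that by simp
  qed
  have "leaves Y1 \<union> leaves Y2 = {LTri}" using a(3) Y(1) by simp
  then have l1: "leaves Y1 = {LTri}" and l2: "leaves Y2 = {LTri}"
    using sub_single[OF _ leaves_ne leaves_ne] by blast+
  have "leaves A = leaves Z" unfolding Y(2) by (rule leaves_pow[OF l1])
  moreover have "leaves B = leaves Z" unfolding Y(3) by (rule leaves_pow[OF l2])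
  ultimately have "leaves A = leaves B" by simp
  then show False using lv by auto
qed



definition nopow :: "'a trm \<Rightarrow> bool" where
  "nopow P \<longleftrightarrow> (\<forall>Y Z. se P = repl Y (gl LTri Z) \<longrightarrow> leaves Y = {LTri} \<longrightarrow> Y \<noteq> Leaf LTri \<longrightarrow> False)"

lemma NP0:
  shows "sterm P \<Longrightarrow> nopow P" and "cterm P \<Longrightarrow> nopow P" and "dterm P \<Longrightarrow> nopow P"
proof (induction rule: sterm_cterm_dterm.inducts)
  case (3 P) then show ?case unfolding nopow_def using NP_l by blast
next
  case (5 P) then show ?case unfolding nopow_def using NP_l by blast
next
  case (4 P Q)
  show ?case unfolding nopow_def
  proof (intro allI impI)
    fix Y Z assume h: "se (LAnd P Q) = repl Y (gl LTri Z)" "leaves Y = {LTri}" "Y \<noteq> Leaf LTri"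
    have e: "repl (se P) (gl LT (se Q)) = repl Y (gl LTri Z)" using h(1) se_and by metis
    have "LF \<notin> leaves Y" using h(2) by simp
    then obtain A' where A': "Z = repl A' (gl LT (se Q))" "LF \<in> leaves A'"
      using L_A[OF e, of LF] star_leaves(1)[OF 4(1)] by auto
    have "LT \<in> leaves (se (LAnd P Q))" using star_leaves(2)[OF sterm_cterm_dterm.intros(4)[OF 4(1,2)]] by simp
    then have "LT \<in> leaves Z" using leaves_pow[OF h(2), of Z] h(1) by simp
    then have "LT \<in> leaves A'" using A'(1) by (auto simp: leaves_repl split: if_splits)
    then have "se P = repl Y (gl LTri A')" using L_P[OF e h(2) A'(1)] star_leaves(3)[OF 4(2)] by blast
    then show False using 4(3) h(2,3) unfolding nopow_def by blast
  qed
next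
  case (6 P Q)
  show ?case unfolding nopow_def
  proof (intro allI impI)
    fix Y Z assume h: "se (LOr P Q) = repl Y (gl LTri Z)" "leaves Y = {LTri}" "Y \<noteq> Leaf LTri"
    have e: "repl (se P) (gl LF (se Q)) = repl Y (gl LTri Z)" using h(1) se_or by metis
    have "LT \<notin> leaves Y" using h(2) by simp
    then obtain A' where A': "Z = repl A' (gl LF (se Q))" "LT \<in> leaves A'"
      using L_A[OF e, of LT] star_leaves(1)[OF 6(1)] by auto
    have "LF \<in> leaves (se (LOr P Q))" using star_leaves(3)[OF sterm_cterm_dterm.intros(6)[OF 6(1,2)]] by simp
    then have "LF \<in> leaves Z" using leaves_pow[OF h(2), of Z] h(1) by simp
    then have "LF \<in> leaves A'" using A'(1) by (auto simp: leaves_repl split: if_splits)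
    then have "se P = repl Y (gl LTri A')" using L_P[OF e h(2) A'(1)] star_leaves(2)[OF 6(2)] by blast
    then show False using 6(3) h(2,3) unfolding nopow_def by blast
  qed
qed

lemma NP: "sterm P \<Longrightarrow> se P = repl Y (gl LTri Z) \<Longrightarrow> leaves Y = {LTri} \<Longrightarrow> Y \<noteq> Leaf LTri \<Longrightarrow> False"
  using NP0(1) unfolding nopow_def by blast



lemma pure:
  assumes "leaves (repl Yi (gl LTri Z)) = {l}" "l \<notin> leaves Yi" "l' \<in> leaves Z" "l' \<noteq> l"
  shows False
proof (cases "LTri \<in> leaves Yi")
  case True
  then have "leaves Z \<subseteq> leaves (repl Yi (gl LTri Z))" by (auto simp: leaves_repl)
  then show False using assms by auto
next
  case False
  obtain x where x: "x \<in> leaves Yi" using leaves_ne[of Yi] by auto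
  then have "x \<noteq> LTri" using False by auto
  then have "x \<in> leaves (repl Yi (gl LTri Z))" using x by (auto simp: leaves_repl)
  then show False using assms x by auto
qed

lemma NG_l:
  assumes "lterm Q" "se Q = repl Y (gl LTri Z)" "l \<notin> leaves Y" "LT \<in> leaves Z" "LF \<in> leaves Z"
    "l = LT \<or> l = LF" "Y \<noteq> Leaf LTri"
  shows False
proof -
  obtain A b B where s: "se Q = Node A b B" and lv: "(leaves A = {LT} \<and> leaves B = {LF}) \<or> (leaves A = {LF} \<and> leaves B = {LT})"
    using lterm_shape[OF assms(1)] by blast
  have e: "repl Y (gl LTri Z) = Node A b B" using assms(2) s by argo
  obtain Y1 Y2 where Y: "Y = Node Y1 b Y2" "A = repl Y1 (gl LTri Z)" "B = repl Y2 (gl LTri Z)"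
  proof (cases Y)
    case (Leaf m)
    then show ?thesis using assms(7) e by (cases "m = LTri") simp_all
  next
    case (Node Y1 c Y2)
    then show ?thesis using e that by simp
  qed
  have n1: "l \<notin> leaves Y1" and n2: "l \<notin> leaves Y2" using assms(3) Y(1) by simp_all
  show False using lv assms(4,5,6)
  proof (elim disjE conjE)
    assume "leaves A = {LT}" "l = LT" then show False using pure[of Y1 Z l LF] Y(2) n1 assms(5) by simp
  next
    assume "leaves B = {LT}" "l = LT" then show False using pure[of Y2 Z l LF] Y(3) n2 assms(5) by simp
  next
    assume "leaves B = {LF}" "l = LF" then show False using pure[of Y2 Z l LT] Y(3) n2 assms(4) by simp
  next
    assume "leaves A = {LF}" "l = LF" then show False using pure[of Y1 Z l LT] Y(2) n1 assms(4) by simp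
  qed
qed

lemma only_tri: "LT \<notin> leaves Y \<Longrightarrow> LF \<notin> leaves Y \<Longrightarrow> leaves Y = {LTri}"
proof -
  assume a: "LT \<notin> leaves Y" "LF \<notin> leaves Y"
  have "\<forall>x\<in>leaves Y. x = LTri" using a leaf3 by metis
  then show ?thesis using leaves_ne[of Y] by auto
qed

lemma NG_d:
  assumes q: "dterm Q" and h: "se Q = repl Y (gl LTri Z)" "LT \<notin> leaves Y" "LT \<in> leaves Z" "LF \<in> leaves Z"
    "Y \<noteq> Leaf LTri"
  shows False
proof -
  have "lterm Q \<or> (\<exists>R S. Q = LOr R S \<and> sterm R \<and> cterm S)" using q by (cases rule: dterm.cases) auto
  then show False
  proof (elim disjE exE conjE)
    assume "lterm Q" then show False using NG_l h by blast
  next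
    fix R S assume h2: "Q = LOr R S" "sterm R" "cterm S"
    have e: "repl (se R) (gl LF (se S)) = repl Y (gl LTri Z)" using h(1) h2(1) se_or by metis
    show False
    proof (cases "LF \<in> leaves Y")
      case True
      show False by (rule L_mix[OF e True _ h(2) _ h(4)]) (use star_leaves(1)[OF h2(2)] star_leaves(2)[OF h2(3)] in auto)
    next
      case False
      have "sterm Q" using h2 sterm_cterm_dterm.intros(2,6) by metis
      then show False using NP[OF _ h(1) only_tri[OF h(2) False] h(5)] by blast
    qed
  qed
qed

lemma NG_c:
  assumes q: "cterm Q" and h: "se Q = repl Y (gl LTri Z)" "LF \<notin> leaves Y" "LT \<in> leaves Z" "LF \<in> leaves Z"
    "Y \<noteq> Leaf LTri"
  shows False
proof -
  have "lterm Q \<or> (\<exists>R S. Q = LAnd R S \<and> sterm R \<and> dterm S)" using q by (cases rule: cterm.cases) auto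
  then show False
  proof (elim disjE exE conjE)
    assume "lterm Q" then show False using NG_l h by blast
  next
    fix R S assume h2: "Q = LAnd R S" "sterm R" "dterm S"
    have e: "repl (se R) (gl LT (se S)) = repl Y (gl LTri Z)" using h(1) h2(1) se_and by metis
    show False
    proof (cases "LT \<in> leaves Y")
      case True
      show False by (rule L_mix[OF e True _ h(2) _ h(3)]) (use star_leaves(1)[OF h2(2)] star_leaves(3)[OF h2(3)] in auto)
    next
      case False
      have "sterm Q" using h2 sterm_cterm_dterm.intros(1,4) by metis
      then show False using NP[OF _ h(1) only_tri[OF False h(2)] h(5)] by blast
    qed
  qed
qed



definition candG :: "leaf \<Rightarrow> leaf \<Rightarrow> 'a tree \<Rightarrow> 'a tree \<Rightarrow> 'a tree \<Rightarrow> bool" where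
  "candG l0 l1 X Y Z \<longleftrightarrow> in_TA Z \<and> X = repl Y (gl LTri Z)
     \<and> LTri \<in> leaves Y \<and> l1 \<in> leaves Y \<and> l0 \<notin> leaves Y
     \<and> LT \<in> leaves Z \<and> LF \<in> leaves Z"

lemma gl_fold: "(\<lambda>l. Leaf l)(l0 := U) = gl l0 U"
  unfolding gl_def ..

lemma ccd_eq: "ccd X Y Z = candG LT LF X Y Z"
  unfolding ccd_def candG_def gl_fold ..
lemma cdd_eq: "cdd X Y Z = candG LF LT X Y Z"
  unfolding cdd_def candG_def gl_fold ..

lemma main_gen:
  assumes ll: "(l0 = LT \<and> l1 = LF) \<or> (l0 = LF \<and> l1 = LT)"
    and A: "l0 \<in> leaves A" "l1 \<in> leaves A" "LTri \<notin> leaves A"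
    and U: "LT \<in> leaves U" "LF \<in> leaves U" "LTri \<notin> leaves U"
    and NGU: "\<not> (\<exists>Yc Z. U = repl Yc (gl LTri Z) \<and> l0 \<notin> leaves Yc \<and> LT \<in> leaves Z \<and> LF \<in> leaves Z
               \<and> Yc \<noteq> Leaf LTri)"
  shows "\<forall>Y Z. (candG l0 l1 (repl A (gl l0 U)) Y Z \<and>
           \<not> (\<exists>Y' Z'. (Y', Z') \<noteq> (Y, Z) \<and> candG l0 l1 (repl A (gl l0 U)) Y' Z' \<and> depth Z' < depth Z))
          \<longleftrightarrow> (Y, Z) = (repl A (gl l0 (Leaf LTri)), U)"
    and "\<not> (\<exists>Y Z. candG l1 l0 (repl A (gl l0 U)) Y Z)"
proof -
  have n0: "l0 \<noteq> LTri" "l1 \<noteq> LTri" "l0 \<noteq> l1" and u0: "l0 \<in> leaves U" "l1 \<in> leaves U"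
    using ll U by auto
  define X where "X = repl A (gl l0 U)"
  define Y0 where "Y0 = repl A (gl l0 (Leaf LTri))"
  have "repl Y0 (gl LTri U) = repl A (\<lambda>l. repl (gl l0 (Leaf LTri) l) (gl LTri U))"
    unfolding Y0_def by (rule repl_repl)
  also have "\<dots> = X" unfolding X_def
    by (rule repl_cong) (use A(3) in auto)
  finally have eq0: "X = repl Y0 (gl LTri U)" by simp
  have lY0: "leaves Y0 = leaves A - {l0} \<union> {LTri}" unfolding Y0_def leaves_gl using A(1) by simp
  have c0: "candG l0 l1 X Y0 U" unfolding candG_def in_TA_def
    using eq0 lY0 n0 A U by auto
  have key: "Y = Y0 \<and> Z = U" if c: "candG l0 l1 X Y Z" and d: "depth Z \<le> depth U" for Y Z
  proof -
    have e: "repl A (gl l0 U) = repl Y (gl LTri Z)" using c unfolding candG_def X_def by simp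
    have z0: "l0 \<in> leaves Z" using c ll unfolding candG_def by auto
    have good: "\<forall>Yc. U = repl Yc (gl LTri Z) \<longrightarrow> leaves Yc \<subseteq> leaves Y \<longrightarrow> Yc = Leaf LTri"
    proof (intro allI impI)
      fix Yc assume h: "U = repl Yc (gl LTri Z)" "leaves Yc \<subseteq> leaves Y"
      have "l0 \<notin> leaves Yc" using h(2) c unfolding candG_def by auto
      then show "Yc = Leaf LTri" using NGU h(1) c unfolding candG_def by blast
    qed
    show ?thesis using L_C[OF e z0 d n0(1) good] A(1) unfolding Y0_def by simp
  qed
  show "\<forall>Y Z. (candG l0 l1 (repl A (gl l0 U)) Y Z \<and>
           \<not> (\<exists>Y' Z'. (Y', Z') \<noteq> (Y, Z) \<and> candG l0 l1 (repl A (gl l0 U)) Y' Z' \<and> depth Z' < depth Z))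
          \<longleftrightarrow> (Y, Z) = (repl A (gl l0 (Leaf LTri)), U)"
    unfolding X_def[symmetric] Y0_def[symmetric]
  proof (intro allI iffI)
    fix Y Z
    assume h: "candG l0 l1 X Y Z \<and> \<not> (\<exists>Y' Z'. (Y', Z') \<noteq> (Y, Z) \<and> candG l0 l1 X Y' Z' \<and> depth Z' < depth Z)"
    show "(Y, Z) = (Y0, U)"
    proof (cases "depth Z \<le> depth U")
      case True
      have "Y = Y0 \<and> Z = U" using key[of Y Z] h True by blast
      then show ?thesis by simp
    next
      case False
      then have ne: "(Y0, U) \<noteq> (Y, Z)" by auto
      have "\<exists>Y' Z'. (Y', Z') \<noteq> (Y, Z) \<and> candG l0 l1 X Y' Z' \<and> depth Z' < depth Z"
        using ne c0 False by (intro exI[of _ Y0] exI[of _ U]) auto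
      then show ?thesis using h by blast
    qed
  next
    fix Y Z assume h: "(Y, Z) = (Y0, U)"
    have "\<not> (\<exists>Y' Z'. (Y', Z') \<noteq> (Y, Z) \<and> candG l0 l1 X Y' Z' \<and> depth Z' < depth Z)"
    proof
      assume "\<exists>Y' Z'. (Y', Z') \<noteq> (Y, Z) \<and> candG l0 l1 X Y' Z' \<and> depth Z' < depth Z"
      then obtain Y' Z' where "(Y', Z') \<noteq> (Y, Z)" "candG l0 l1 X Y' Z'" "depth Z' < depth Z" by blast
      then show False using key[of Y' Z'] h by auto
    qed
    then show "candG l0 l1 X Y Z \<and> \<not> (\<exists>Y' Z'. (Y', Z') \<noteq> (Y, Z) \<and> candG l0 l1 X Y' Z' \<and> depth Z' < depth Z)"
      using c0 h by simp
  qed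
  show "\<not> (\<exists>Y Z. candG l1 l0 (repl A (gl l0 U)) Y Z)"
  proof
    assume "\<exists>Y Z. candG l1 l0 (repl A (gl l0 U)) Y Z"
    then obtain Y Z where c: "candG l1 l0 (repl A (gl l0 U)) Y Z" by blast
    have e: "repl A (gl l0 U) = repl Y (gl LTri Z)" using c unfolding candG_def by simp
    have "l0 \<in> leaves Y" "l1 \<notin> leaves Y" "l0 \<in> leaves Z" using c ll unfolding candG_def by auto
    then show False using L_mix[OF e _ A(2) _ u0(2) _ n0(3,1,2)] by blast
  qed
qed

theorem theorem3p6:
  fixes P Q :: "'a trm"
  shows "(sterm P \<and> dterm Q \<longrightarrow>
            (\<forall>Y Z. cd (se (LAnd P Q)) Y Z \<longleftrightarrow>
                   (Y, Z) = (repl (se P) ((\<lambda>l. Leaf l)(LT := Leaf LTri)), se Q))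
          \<and> (\<nexists>Y Z. dd (se (LAnd P Q)) Y Z))
       \<and> (sterm P \<and> cterm Q \<longrightarrow>
            (\<nexists>Y Z. cd (se (LOr P Q)) Y Z)
          \<and> (\<forall>Y Z. dd (se (LOr P Q)) Y Z \<longleftrightarrow>
                   (Y, Z) = (repl (se P) ((\<lambda>l. Leaf l)(LF := Leaf LTri)), se Q)))"
proof (intro conjI impI; elim conjE)
  assume p: "sterm P" and q: "dterm Q"
  have Q: "LT \<in> leaves (se Q)" "LF \<in> leaves (se Q)" using star_leaves(3)[OF q] by auto
  note m = main_gen[of LT LF "se P" "se Q", OF _ _ _ se_noTri Q se_noTri]
  have NGU: "\<not> (\<exists>Yc Z. se Q = repl Yc (gl LTri Z) \<and> LT \<notin> leaves Yc \<and> LT \<in> leaves Z \<and> LF \<in> leaves Z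
               \<and> Yc \<noteq> Leaf LTri)" using NG_d[OF q] by blast
  have P: "LT \<in> leaves (se P)" "LF \<in> leaves (se P)" using star_leaves(1)[OF p] by auto
  note m1 = m[OF _ P NGU]
  show "\<forall>Y Z. cd (se (LAnd P Q)) Y Z \<longleftrightarrow>
                   (Y, Z) = (repl (se P) ((\<lambda>l. Leaf l)(LT := Leaf LTri)), se Q)"
    unfolding cd_def ccd_eq se_and gl_fold by (rule m1(1)) simp
  show "\<nexists>Y Z. dd (se (LAnd P Q)) Y Z"
    unfolding dd_def cdd_eq se_and using m1(2) by blast
next
  assume p: "sterm P" and q: "cterm Q"
  have Q: "LT \<in> leaves (se Q)" "LF \<in> leaves (se Q)" using star_leaves(2)[OF q] by auto
  note m = main_gen[of LF LT "se P" "se Q", OF _ _ _ se_noTri Q se_noTri]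
  have NGU: "\<not> (\<exists>Yc Z. se Q = repl Yc (gl LTri Z) \<and> LF \<notin> leaves Yc \<and> LT \<in> leaves Z \<and> LF \<in> leaves Z
               \<and> Yc \<noteq> Leaf LTri)" using NG_c[OF q] by blast
  have P: "LF \<in> leaves (se P)" "LT \<in> leaves (se P)" using star_leaves(1)[OF p] by auto
  note m1 = m[OF _ P NGU]
  show "\<forall>Y Z. dd (se (LOr P Q)) Y Z \<longleftrightarrow>
                   (Y, Z) = (repl (se P) ((\<lambda>l. Leaf l)(LF := Leaf LTri)), se Q)"
    unfolding dd_def cdd_eq se_or gl_fold by (rule m1(1)) simp
  show "\<nexists>Y Z. cd (se (LOr P Q)) Y Z"
    unfolding cd_def ccd_eq se_or using m1(2) by blast
qed


end
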